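(* Let $f$, $Q$, $L$, $d_Q$ and $T\in\mathbb{N}_0$ be as in the context, and let the sequences $(x_t)_{t=0}^{T+1}$, $(u_t)_{t=0}^{T+1}$, $(z_t)_{t=0}^{T}$, $(\hat x_t)_{t=1}^{T+1}$, $(\gamma_t)_{t=0}^{T+1}$, $(\Gamma_t)_{t=0}^{T+1}$, $(\tau_t)_{t=0}^{T}$, $(L_t)_{t=0}^{T}$ be generated by the algorithm described in the context. Then for every $0\le t\le T$, \[ \Gamma_t f(u_t)+\sum_{k=0}^{t-1}(L_{k+1}-L_k)\Big(d_Q(z_{k+1})-\tfrac12\|z_k-\hat x_{k+1}\|^2\Big)\le \psi_t, \] where \[ \psi_t:=\min_{x\in Q}\Big\{\sum_{k=0}^{t}\gamma_k\big(f(x_k)+\langle\nabla f(x_k),x-x_k\rangle\big)+L_t d_Q(x)\Big\}. \]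
   Context: $\mathbb{R}^n$ carries the standard scalar product $\langle\cdot,\cdot\rangle$ and a (possibly different) norm $\|\cdot\|$, with dual norm $\|u\|_*=\max\{\langle u,x\rangle:\|x\|=1\}$. $Q\subseteq\mathbb{R}^n$ is closed and convex; $f:\mathbb{R}^n\to\mathbb{R}$ is convex, differentiable, attains its minimum on $Q$, and $L>0$ satisfies $\|\nabla f(x)-\nabla f(y)\|_*\le L\|x-y\|$ for all $x,y\in Q$. A distance-generating function for $Q$ is $d_Q:Q\to\mathbb{R}_{\ge0}$ that is continuous on $Q$, strongly convex with modulus 1 w.r.t. $\|\cdot\|$ (i.e. $d_Q(\lambda x+(1-\lambda)y)+\frac{\lambda(1-\lambda)}2\|x-y\|^2\le\lambda d_Q(x)+(1-\lambda)d_Q(y)$ for $x,y\in Q$, $\lambda\in[0,1]$), and whose subdifferential admits a continuous selection $d_Q'$ on $Q^o:=\{x\in Q:\partial d_Q(x)\neq\emptyset\}$. For $z\in Q^o$, the Bregman distance is $V_z(x)=d_Q(x)-d_Q(z)-\langle d_Q'(z),x-z\rangle$, and the prox-mapping is $\mathrm{Prox}_{Q,z}(s)=\arg\min_{x\in Q}\{\langle s,x-z\rangle+V_z(x)\}$ (a unique minimizer, lying in $Q^o$). The $d_Q$-center is $c(d_Q)=\arg\min_{x\in Q}d_Q(x)$, and it is assumed that $d_Q(c(d_Q))=0$. Algorithm: choose $T\in\mathbb{N}_0$ and numbers $(\gamma_t)_{t=0}^{T+1}$ with $\gamma_0\in(0,1]$, $\gamma_t\ge0$ and $\gamma_t^2\le\Gamma_t:=\sum_{k=0}^t\gamma_k$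 for all $0\le t\le T+1$. Set $L_0=L$, $x_0=c(d_Q)$, $u_0=\arg\min_{x\in Q}\{\gamma_0(f(x_0)+\langle\nabla f(x_0),x-x_0\rangle)+L_0d_Q(x)\}$, $z_0=u_0$, $\tau_0=\gamma_1/\Gamma_1$, $x_1=\tau_0z_0+(1-\tau_0)u_0(=z_0)$, $\hat x_1=\mathrm{Prox}_{Q,z_0}(\gamma_1\nabla f(x_1)/L_0)$, $u_1=\tau_0\hat x_1+(1-\tau_0)u_0$. For $t=1,\dots,T$: choose $0<L_t\le L$ with $f(u_t)\le f(x_t)+\langle\nabla f(x_t),u_t-x_t\rangle+\frac{L_t}{2}\|u_t-x_t\|^2$; set $z_t=\arg\min_{x\in Q}\{\sum_{k=0}^t\gamma_k(f(x_k)+\langle\nabla f(x_k),x-x_k\rangle)+L_td_Q(x)\}$; set $\tau_t=\gamma_{t+1}/\Gamma_{t+1}$ and $x_{t+1}=\tau_tz_t+(1-\tau_t)u_t$; set $\hat x_{t+1}=\mathrm{Prox}_{Q,z_t}(\gamma_{t+1}\nabla f(x_{t+1})/L_t)$; set $u_{t+1}=\tau_t\hat x_{t+1}+(1-\tau_t)u_t$. *)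

theory Defs
  imports "HOL-Analysis.Analysis"
begin

definition is_norm :: "('a::real_vector \<Rightarrow> real) \<Rightarrow> bool" where
  "is_norm N \<longleftrightarrow> (\<forall>x. N x = 0 \<longleftrightarrow> x = 0) \<and> (\<forall>c x. N (c *\<^sub>R x) = \<bar>c\<bar> * N x)
     \<and> (\<forall>x y. N (x + y) \<le> N x + N y)"

definition dual_norm :: "('a::real_inner \<Rightarrow> real) \<Rightarrow> 'a \<Rightarrow> real" where
  "dual_norm N u = Sup {u \<bullet> x | x. N x = 1}"

definition strongly_convex_1 :: "('a::real_vector \<Rightarrow> real) \<Rightarrow> 'a set \<Rightarrow> ('a \<Rightarrow> real) \<Rightarrow> bool" where
  "strongly_convex_1 N Q d \<longleftrightarrow> (\<forall>x\<in>Q. \<forall>y\<in>Q. \<forall>lam::real. 0 \<le> lam \<longrightarrow> lam \<le> 1 \<longrightarrow>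
      d (lam *\<^sub>R x + (1 - lam) *\<^sub>R y) + lam * (1 - lam) / 2 * (N (x - y))\<^sup>2
        \<le> lam * d x + (1 - lam) * d y)"

text \<open>Subdifferential of d regarded as a function on Q (i.e. +infinity outside Q).\<close>
definition subdiff_on :: "'a set \<Rightarrow> ('a::real_inner \<Rightarrow> real) \<Rightarrow> 'a \<Rightarrow> 'a set" where
  "subdiff_on Q d x = {s. \<forall>y\<in>Q. d x + s \<bullet> (y - x) \<le> d y}"

definition subdiff_dom :: "'a set \<Rightarrow> ('a::real_inner \<Rightarrow> real) \<Rightarrow> 'a set" where
  "subdiff_dom Q d = {x\<in>Q. subdiff_on Q d x \<noteq> {}}"

definition dist_gen_fun :: "('a::real_inner \<Rightarrow> real) \<Rightarrow> 'a set \<Rightarrow> ('a \<Rightarrow> real) \<Rightarrow> ('a \<Rightarrow> 'a) \<Rightarrow> bool" where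
  "dist_gen_fun N Q d d' \<longleftrightarrow> (\<forall>x\<in>Q. 0 \<le> d x) \<and> continuous_on Q d \<and> strongly_convex_1 N Q d
     \<and> (\<forall>x\<in>subdiff_dom Q d. d' x \<in> subdiff_on Q d x) \<and> continuous_on (subdiff_dom Q d) d'"

definition bregman :: "('a::real_inner \<Rightarrow> real) \<Rightarrow> ('a \<Rightarrow> 'a) \<Rightarrow> 'a \<Rightarrow> 'a \<Rightarrow> real" where
  "bregman d d' z x = d x - d z - d' z \<bullet> (x - z)"

definition is_prox :: "'a set \<Rightarrow> ('a::real_inner \<Rightarrow> real) \<Rightarrow> ('a \<Rightarrow> 'a) \<Rightarrow> 'a \<Rightarrow> 'a \<Rightarrow> 'a \<Rightarrow> bool" where
  "is_prox Q d d' z s p \<longleftrightarrow> is_arg_min (\<lambda>x. s \<bullet> (x - z) + bregman d d' z x) (\<lambda>x. x \<in> Q) p"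

definition lin_model :: "('a::real_inner \<Rightarrow> real) \<Rightarrow> ('a \<Rightarrow> 'a) \<Rightarrow> (nat \<Rightarrow> real) \<Rightarrow> (nat \<Rightarrow> 'a) \<Rightarrow> nat \<Rightarrow> 'a \<Rightarrow> real" where
  "lin_model f g \<gamma> x t y = (\<Sum>k\<le>t. \<gamma> k * (f (x k) + g (x k) \<bullet> (y - x k)))"

end

theory Submission
  imports Defs
begin

lemma isn_0: "is_norm N \<Longrightarrow> N 0 = 0" by (simp add: is_norm_def)
lemma isn_scale: "is_norm N \<Longrightarrow> N (c *\<^sub>R x) = \<bar>c\<bar> * N x" by (simp add: is_norm_def)
lemma isn_tri: "is_norm N \<Longrightarrow> N (x + y) \<le> N x + N y" by (simp add: is_norm_def)
lemma isn_minus: "is_norm N \<Longrightarrow> N (- x) = N x"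
  using isn_scale[of N "-1" x] by simp
lemma isn_commute: "is_norm N \<Longrightarrow> N (x - y) = N (y - x)"
  using isn_minus[of N "x - y"] by simp
lemma isn_nonneg: "is_norm N \<Longrightarrow> 0 \<le> N x"
proof -
  assume n: "is_norm N"
  have "N (x + - x) \<le> N x + N (- x)" by (rule isn_tri[OF n])
  thus ?thesis using isn_0[OF n] isn_minus[OF n, of x] by simp
qed
lemma isn_pos: "is_norm N \<Longrightarrow> x \<noteq> 0 \<Longrightarrow> 0 < N x"
  using isn_nonneg[of N x] by (auto simp: is_norm_def)

lemma isn_sum: "is_norm N \<Longrightarrow> N (sum h A) \<le> (\<Sum>a\<in>A. N (h a))"
proof (induction A rule: infinite_finite_induct)
  case (infinite A) then show ?case by (simp add: isn_0)
next
  case empty then show ?case by (simp add: isn_0)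
next
  case (insert a A)
  then show ?case using isn_tri[OF insert.prems, of "h a" "sum h A"] by simp
qed

lemma isn_upper:
  fixes N :: "'a::euclidean_space \<Rightarrow> real"
  assumes n: "is_norm N"
  shows "N x \<le> (\<Sum>b\<in>Basis. N b) * norm x"
proof -
  have "N x = N (\<Sum>b\<in>Basis. (x \<bullet> b) *\<^sub>R b)" by (simp add: euclidean_representation)
  also have "\<dots> \<le> (\<Sum>b\<in>Basis. N ((x \<bullet> b) *\<^sub>R b))" by (rule isn_sum[OF n])
  also have "\<dots> = (\<Sum>b\<in>Basis. \<bar>x \<bullet> b\<bar> * N b)" by (simp add: isn_scale[OF n])
  also have "\<dots> \<le> (\<Sum>b\<in>Basis. norm x * N b)"
    by (intro sum_mono mult_right_mono Basis_le_norm isn_nonneg[OF n])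
  also have "\<dots> = (\<Sum>b\<in>Basis. N b) * norm x" by (simp add: sum_distrib_left mult.commute)
  finally show ?thesis .
qed

lemma isn_cont:
  fixes N :: "'a::euclidean_space \<Rightarrow> real"
  assumes n: "is_norm N"
  shows "continuous_on S N"
proof -
  let ?C = "\<Sum>b\<in>Basis. N b"
  have C0: "0 \<le> ?C" by (intro sum_nonneg isn_nonneg[OF n])
  have "?C-lipschitz_on S N"
  proof (rule lipschitz_onI)
    fix x y assume "x \<in> S" "y \<in> S"
    have "N x \<le> N y + N (x - y)" using isn_tri[OF n, of y "x - y"] by simp
    moreover have "N y \<le> N x + N (y - x)" using isn_tri[OF n, of x "y - x"] by simp
    ultimately have "\<bar>N x - N y\<bar> \<le> N (x - y)" using isn_commute[OF n, of x y] by linarith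
    also have "\<dots> \<le> ?C * norm (x - y)" by (rule isn_upper[OF n])
    finally show "dist (N x) (N y) \<le> ?C * dist x y" by (simp add: dist_norm dist_real_def)
  qed (rule C0)
  thus ?thesis by (rule lipschitz_on_continuous_on)
qed

lemma isn_lower:
  fixes N :: "'a::euclidean_space \<Rightarrow> real"
  assumes n: "is_norm N"
  shows "\<exists>m>0. \<forall>x. m * norm x \<le> N x"
proof -
  obtain b :: 'a where b: "b \<in> Basis" using nonempty_Basis by blast
  have "sphere 0 1 \<noteq> ({} :: 'a set)" using b by (auto simp: norm_Basis intro!: exI[of _ b])
  then obtain y where y: "y \<in> sphere (0::'a) 1" and ym: "\<forall>w\<in>sphere 0 1. N y \<le> N w"
    using continuous_attains_inf[OF compact_sphere _ isn_cont[OF n]] by blast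
  have y0: "y \<noteq> 0" using y by auto
  have "0 < N y" by (rule isn_pos[OF n y0])
  moreover have "N y * norm x \<le> N x" for x
  proof (cases "x = 0")
    case True then show ?thesis by (simp add: isn_0[OF n])
  next
    case False
    have "(1 / norm x) *\<^sub>R x \<in> sphere 0 1" using False by simp
    hence "N y \<le> N ((1 / norm x) *\<^sub>R x)" using ym by blast
    also have "\<dots> = N x / norm x" using isn_scale[OF n] by simp
    finally show ?thesis using False by (simp add: field_simps)
  qed
  ultimately show ?thesis by blast
qed

lemma dual_norm_ineq:
  fixes N :: "'a::euclidean_space \<Rightarrow> real"
  assumes n: "is_norm N"
  shows "u \<bullet> h \<le> dual_norm N u * N h"
proof -
  obtain m where m: "m > 0" "\<And>x. m * norm x \<le> N x" using isn_lower[OF n] by blast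
  let ?S = "{u \<bullet> x | x. N x = 1}"
  have bdd: "bdd_above ?S"
  proof (rule bdd_aboveI)
    fix r assume "r \<in> ?S"
    then obtain x where x: "r = u \<bullet> x" "N x = 1" by blast
    have "norm x \<le> 1 / m" using m(2)[of x] x(2) m(1) by (simp add: field_simps)
    have "r \<le> norm u * norm x" using x(1) norm_cauchy_schwarz by simp
    also have "\<dots> \<le> norm u * (1/m)" by (intro mult_left_mono) (use \<open>norm x \<le> 1/m\<close> in auto)
    finally show "r \<le> norm u / m" by simp
  qed
  show ?thesis
  proof (cases "h = 0")
    case True
    obtain b :: 'a where b: "b \<in> Basis" using nonempty_Basis by blast
    have "N ((1 / N b) *\<^sub>R b) = 1" using isn_pos[OF n, of b] b isn_scale[OF n]
      by (auto simp: nonzero_Basis)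
    hence "u \<bullet> ((1 / N b) *\<^sub>R b) \<in> ?S" by blast
    hence "u \<bullet> ((1 / N b) *\<^sub>R b) \<le> dual_norm N u" unfolding dual_norm_def
      by (rule cSup_upper[OF _ bdd])
    then show ?thesis using True by (simp add: isn_0[OF n])
  next
    case False
    have p: "0 < N h" by (rule isn_pos[OF n False])
    have "N ((1 / N h) *\<^sub>R h) = 1" using p isn_scale[OF n] by simp
    hence "u \<bullet> ((1 / N h) *\<^sub>R h) \<in> ?S" by blast
    hence "u \<bullet> ((1 / N h) *\<^sub>R h) \<le> dual_norm N u" unfolding dual_norm_def
      by (rule cSup_upper[OF _ bdd])
    then show ?thesis using p by (simp add: field_simps)
  qed
qed


lemma line_deriv:
  fixes f :: "'a::real_inner \<Rightarrow> real"
  assumes fg: "\<And>y. (f has_derivative (\<lambda>h. g y \<bullet> h)) (at y)"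
  shows "((\<lambda>s. f (y + s *\<^sub>R h)) has_real_derivative (g (y + s *\<^sub>R h) \<bullet> h)) (at s)"
proof -
  have "((\<lambda>s. y + s *\<^sub>R h) has_derivative (\<lambda>t. t *\<^sub>R h)) (at s)"
    by (auto intro!: derivative_eq_intros)
  from has_derivative_compose[OF this fg]
  have "((\<lambda>s. f (y + s *\<^sub>R h)) has_derivative (\<lambda>t. g (y + s *\<^sub>R h) \<bullet> (t *\<^sub>R h))) (at s)" .
  moreover have "(\<lambda>t. g (y + s *\<^sub>R h) \<bullet> (t *\<^sub>R h)) = (*) (g (y + s *\<^sub>R h) \<bullet> h)"
    by (auto simp: fun_eq_iff)
  ultimately show ?thesis by (simp add: has_field_derivative_def)
qed

lemma tangent_ineq:
  fixes f :: "'a::real_inner \<Rightarrow> real"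
  assumes fc: "convex_on UNIV f"
    and fg: "\<And>y. (f has_derivative (\<lambda>h. g y \<bullet> h)) (at y)"
  shows "f y + g y \<bullet> (w - y) \<le> f w"
proof -
  let ?h = "w - y"
  let ?p = "\<lambda>s::real. f (y + s *\<^sub>R ?h)"
  have cp: "convex_on UNIV ?p"
    unfolding convex_on_def
  proof (intro conjI ballI allI impI)
    fix a b u v :: real assume uv: "u \<ge> 0" "v \<ge> 0" "u + v = 1"
    have e: "u *\<^sub>R (y + a *\<^sub>R ?h) + v *\<^sub>R (y + b *\<^sub>R ?h) = (u + v) *\<^sub>R y + (u * a + v * b) *\<^sub>R ?h"
      by (simp add: algebra_simps)
    have "y + (u *\<^sub>R a + v *\<^sub>R b) *\<^sub>R ?h = u *\<^sub>R (y + a *\<^sub>R ?h) + v *\<^sub>R (y + b *\<^sub>R ?h)"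
      unfolding e using uv(3) by simp
    then show "?p (u *\<^sub>R a + v *\<^sub>R b) \<le> u * ?p a + v * ?p b"
      using fc uv unfolding convex_on_def by simp
  qed simp
  have d: "(?p has_real_derivative (g y \<bullet> ?h)) (at 0 within UNIV)"
    using line_deriv[OF fg, of y ?h 0] by simp
  have "?p 1 - ?p 0 \<ge> (g y \<bullet> ?h) * (1 - 0)"
    by (rule convex_on_imp_above_tangent[OF cp _ _ _ d]) auto
  then show ?thesis by simp
qed

lemma descent:
  fixes f :: "'a::euclidean_space \<Rightarrow> real"
  assumes n: "is_norm N" and Qc: "convex Q"
    and fg: "\<And>y. (f has_derivative (\<lambda>h. g y \<bullet> h)) (at y)"
    and lip: "\<And>y w. y \<in> Q \<Longrightarrow> w \<in> Q \<Longrightarrow> dual_norm N (g y - g w) \<le> Lf * N (y - w)"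
    and yQ: "y \<in> Q" and wQ: "w \<in> Q"
  shows "f w \<le> f y + g y \<bullet> (w - y) + Lf / 2 * (N (w - y))\<^sup>2"
proof -
  let ?h = "w - y"
  let ?p = "\<lambda>s::real. f (y + s *\<^sub>R ?h) - f y - s * (g y \<bullet> ?h) - Lf * s\<^sup>2 / 2 * (N ?h)\<^sup>2"
  have "?p 0 \<ge> ?p 1"
  proof (rule DERIV_nonpos_imp_nonincreasing[of 0 1 ?p])
    fix s :: real assume s: "0 \<le> s" "s \<le> 1"
    let ?q = "y + s *\<^sub>R ?h"
    have "(?p has_real_derivative (g ?q \<bullet> ?h - g y \<bullet> ?h - Lf * s * (N ?h)\<^sup>2)) (at s)"
    proof -
      have d1: "((\<lambda>s. f (y + s *\<^sub>R ?h)) has_real_derivative (g ?q \<bullet> ?h)) (at s)"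
        by (rule line_deriv[OF fg])
      have d2: "((\<lambda>s. Lf * s\<^sup>2 / 2 * (N ?h)\<^sup>2) has_real_derivative (Lf * s * (N ?h)\<^sup>2)) (at s)"
        by (auto intro!: derivative_eq_intros simp: power2_eq_square)
      have d3: "((\<lambda>s. s * (g y \<bullet> ?h)) has_real_derivative (g y \<bullet> ?h)) (at s)"
        by (auto intro!: derivative_eq_intros)
      show ?thesis
        using DERIV_diff[OF DERIV_diff[OF DERIV_diff[OF d1 DERIV_const[of "f y"]] d3] d2] by simp
    qed
    moreover have "g ?q \<bullet> ?h - g y \<bullet> ?h - Lf * s * (N ?h)\<^sup>2 \<le> 0"
    proof -
      have qQ: "?q \<in> Q"
      proof -
        have "?q = (1 - s) *\<^sub>R y + s *\<^sub>R w" by (simp add: algebra_simps)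
        thus ?thesis using Qc yQ wQ s by (simp add: convex_alt)
      qed
      have "g ?q \<bullet> ?h - g y \<bullet> ?h = (g ?q - g y) \<bullet> ?h" by (simp add: inner_diff_left)
      also have "\<dots> \<le> dual_norm N (g ?q - g y) * N ?h" by (rule dual_norm_ineq[OF n])
      also have "\<dots> \<le> (Lf * N (?q - y)) * N ?h"
        by (intro mult_right_mono lip qQ yQ isn_nonneg[OF n])
      also have "N (?q - y) = s * N ?h" using isn_scale[OF n, of s ?h] s by simp
      finally show ?thesis by (simp add: power2_eq_square mult_ac)
    qed
    ultimately show "\<exists>D. (?p has_real_derivative D) (at s) \<and> D \<le> 0" by blast
  qed simp
  then show ?thesis by simp
qed


lemma lam_trick1:
  fixes A B :: real
  assumes h: "\<And>l. 0 < l \<Longrightarrow> l \<le> 1 \<Longrightarrow> (1 - l) * B \<le> A" and B: "0 \<le> B"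
  shows "B \<le> A"
proof (rule ccontr)
  assume "\<not> B \<le> A"
  hence BA: "A < B" by simp
  have A0: "0 \<le> A" using h[of 1] by simp
  let ?l = "(B - A) / (2 * B)"
  have Bp: "0 < B" using A0 BA by simp
  have "0 < ?l" using BA Bp by simp
  moreover have "?l \<le> 1" using A0 BA Bp by (simp add: field_simps)
  ultimately have "(1 - ?l) * B \<le> A" by (rule h)
  moreover have "(1 - ?l) * B = (A + B) / 2" using Bp by (simp add: field_simps)
  ultimately show False using BA by simp
qed

lemma lam_trick2:
  fixes A C :: real
  assumes h: "\<And>l. 0 < l \<Longrightarrow> l \<le> 1 \<Longrightarrow> 0 \<le> A + l * C"
  shows "0 \<le> A"
proof (rule ccontr)
  assume "\<not> 0 \<le> A"
  hence A: "A < 0" by simp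
  have C: "0 < C" using h[of 1] A by simp
  let ?l = "min 1 (- A / (2 * C))"
  have "0 < - A / (2 * C)" using A C by (simp add: divide_neg_pos)
  hence "0 < ?l" by simp
  hence "0 \<le> A + ?l * C" by (intro h) auto
  moreover have "?l * C \<le> - A / 2"
  proof -
    have "?l * C \<le> (- A / (2 * C)) * C" by (intro mult_right_mono) (use C in auto)
    also have "\<dots> = - A / 2" using C by simp
    finally show ?thesis .
  qed
  ultimately show False using A by simp
qed

lemma sc_D:
  assumes "strongly_convex_1 N Q d" "x \<in> Q" "y \<in> Q" "0 \<le> lam" "lam \<le> 1"
  shows "d (lam *\<^sub>R x + (1 - lam) *\<^sub>R y) + lam * (1 - lam) / 2 * (N (x - y))\<^sup>2
        \<le> lam * d x + (1 - lam) * d y"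
proof -
  have "\<forall>x\<in>Q. \<forall>y\<in>Q. \<forall>lam::real. 0 \<le> lam \<longrightarrow> lam \<le> 1 \<longrightarrow>
      d (lam *\<^sub>R x + (1 - lam) *\<^sub>R y) + lam * (1 - lam) / 2 * (N (x - y))\<^sup>2
        \<le> lam * d x + (1 - lam) * d y" using assms(1) unfolding strongly_convex_1_def .
  hence "\<forall>lam::real. 0 \<le> lam \<longrightarrow> lam \<le> 1 \<longrightarrow>
      d (lam *\<^sub>R x + (1 - lam) *\<^sub>R y) + lam * (1 - lam) / 2 * (N (x - y))\<^sup>2
        \<le> lam * d x + (1 - lam) * d y" using assms(2,3) by simp
  thus ?thesis using assms(4,5) by simp
qed

lemma sc_convex:
  assumes "strongly_convex_1 N Q d" "is_norm N" "x \<in> Q" "y \<in> Q" "0 \<le> l" "l \<le> 1"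
  shows "d (l *\<^sub>R x + (1 - l) *\<^sub>R y) \<le> l * d x + (1 - l) * d y"
proof -
  have "0 \<le> l * (1 - l) / 2 * (N (x - y))\<^sup>2" using assms(5,6) by simp
  moreover have "d (l *\<^sub>R x + (1 - l) *\<^sub>R y) + l * (1 - l) / 2 * (N (x - y))\<^sup>2 \<le> l * d x + (1 - l) * d y"
    using sc_D[OF assms(1,3-6)] .
  ultimately show ?thesis by linarith
qed

lemma growth:
  fixes d :: "'a::real_inner \<Rightarrow> real"
  assumes sc: "strongly_convex_1 N Q d" and n: "is_norm N" and Qc: "convex Q"
    and s: "s \<in> subdiff_on Q d z" and zQ: "z \<in> Q" and yQ: "y \<in> Q"
  shows "d z + s \<bullet> (y - z) + 1/2 * (N (y - z))\<^sup>2 \<le> d y"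
proof -
  let ?B = "1/2 * (N (y - z))\<^sup>2"
  let ?A = "d y - d z - s \<bullet> (y - z)"
  have "?B \<le> ?A"
  proof (rule lam_trick1)
    fix l :: real assume l: "0 < l" "l \<le> 1"
    let ?p = "l *\<^sub>R y + (1 - l) *\<^sub>R z"
    have pQ: "?p \<in> Q" using Qc yQ zQ l by (simp add: convex_def)
    have e1: "d z + s \<bullet> (?p - z) \<le> d ?p" using s pQ by (simp add: subdiff_on_def)
    have "?p - z = l *\<^sub>R (y - z)" by (simp add: algebra_simps)
    hence e1': "s \<bullet> (?p - z) = l * (s \<bullet> (y - z))" by simp
    have e2: "d ?p + l * (1 - l) / 2 * (N (y - z))\<^sup>2 \<le> l * d y + (1 - l) * d z"
      using sc_D[OF sc yQ zQ] l by simp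
    have e3: "l * (1 - l) / 2 * (N (y - z))\<^sup>2 = l * ((1 - l) * ?B)" by simp
    have e4: "l * ?A = l * d y - l * d z - l * (s \<bullet> (y - z))" by (simp add: algebra_simps)
    have e5: "(1 - l) * d z = d z - l * d z" by (simp add: algebra_simps)
    have "l * ((1 - l) * ?B) \<le> l * ?A" using e1 e1' e2 e3 e4 e5 by linarith
    thus "(1 - l) * ?B \<le> ?A" using l by simp
  qed simp
  thus ?thesis by simp
qed


lemma norm_sq_expand:
  fixes a b :: "'a::real_inner"
  shows "(norm (a + l *\<^sub>R b))\<^sup>2 = (norm a)\<^sup>2 + 2 * l * (a \<bullet> b) + l\<^sup>2 * (norm b)\<^sup>2"
  unfolding power2_norm_eq_inner
  by (simp add: inner_add_left inner_add_right inner_commute power2_eq_square algebra_simps)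

lemma density:
  fixes d :: "'a::euclidean_space \<Rightarrow> real"
  assumes Qcl: "closed Q" and Qc: "convex Q" and dc: "continuous_on Q d"
    and d0: "\<forall>x\<in>Q. 0 \<le> d x"
    and cvx: "\<And>x y l. x \<in> Q \<Longrightarrow> y \<in> Q \<Longrightarrow> 0 \<le> l \<Longrightarrow> l \<le> 1 \<Longrightarrow>
               d (l *\<^sub>R x + (1 - l) *\<^sub>R y) \<le> l * d x + (1 - l) * d y"
    and pQ: "p \<in> Q" and e: "0 < \<epsilon>"
  shows "\<exists>w\<in>subdiff_dom Q d. dist w p < \<epsilon>"
proof -
  define r where "r = \<epsilon> / 2"
  have r: "0 < r" "r < \<epsilon>" using e by (auto simp: r_def)
  define K where "K = 2 * (d p + 1) / r\<^sup>2"
  have K: "0 < K" using d0 pQ r by (auto simp: K_def intro!: divide_pos_pos add_nonneg_pos)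
  define \<phi> where "\<phi> x = d x + K / 2 * (norm (x - p))\<^sup>2" for x
  let ?S = "Q \<inter> cball p r"
  have cS: "compact ?S" by (intro closed_Int_compact Qcl compact_cball)
  have neS: "?S \<noteq> {}" using pQ r by auto
  have contS: "continuous_on ?S \<phi>" unfolding \<phi>_def
    by (intro continuous_intros continuous_on_subset[OF dc]) auto
  obtain w where wS: "w \<in> ?S" and wmin: "\<And>x. x \<in> ?S \<Longrightarrow> \<phi> w \<le> \<phi> x"
    using continuous_attains_inf[OF cS neS contS] by blast
  have wQ: "w \<in> Q" using wS by auto
  have glob: "\<phi> w \<le> \<phi> x" if xQ: "x \<in> Q" for x
  proof (cases "x \<in> cball p r")
    case True then show ?thesis using wmin xQ by auto
  next
    case False
    hence "r < norm (x - p)" by (simp add: dist_norm norm_minus_commute)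
    hence "r\<^sup>2 < (norm (x - p))\<^sup>2" using r by (intro power_strict_mono) auto
    hence "K / 2 * r\<^sup>2 < K / 2 * (norm (x - p))\<^sup>2" using K by simp
    moreover have "K / 2 * r\<^sup>2 = d p + 1" using r by (simp add: K_def)
    moreover have "\<phi> w \<le> \<phi> p" using wmin pQ r by auto
    moreover have "\<phi> p = d p" by (simp add: \<phi>_def)
    moreover have "0 \<le> d x" using d0 xQ by auto
    ultimately show ?thesis unfolding \<phi>_def by linarith
  qed
  have sub: "K *\<^sub>R (p - w) \<in> subdiff_on Q d w"
    unfolding subdiff_on_def
  proof (intro CollectI ballI)
    fix y assume yQ: "y \<in> Q"
    let ?A = "d y - d w + K * ((w - p) \<bullet> (y - w))"
    let ?C = "K / 2 * (norm (y - w))\<^sup>2"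
    have "0 \<le> ?A"
    proof (rule lam_trick2[where C = ?C])
      fix l :: real assume l: "0 < l" "l \<le> 1"
      let ?q = "l *\<^sub>R y + (1 - l) *\<^sub>R w"
      have qQ: "?q \<in> Q" using Qc yQ wQ l by (simp add: convex_def)
      have f1: "d w + K / 2 * (norm (w - p))\<^sup>2 \<le> d ?q + K / 2 * (norm (?q - p))\<^sup>2"
        using glob[OF qQ] unfolding \<phi>_def .
      have f2: "d ?q \<le> l * d y + (1 - l) * d w" using cvx yQ wQ l by simp
      have f3: "(norm (?q - p))\<^sup>2 = (norm (w - p))\<^sup>2 + 2 * l * ((w - p) \<bullet> (y - w)) + l\<^sup>2 * (norm (y - w))\<^sup>2"
      proof -
        have "?q - p = (w - p) + l *\<^sub>R (y - w)" by (simp add: algebra_simps)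
        thus ?thesis by (simp only: norm_sq_expand)
      qed
      have f4: "K / 2 * (norm (?q - p))\<^sup>2 = K / 2 * (norm (w - p))\<^sup>2 + K * l * ((w - p) \<bullet> (y - w)) + K / 2 * l\<^sup>2 * (norm (y - w))\<^sup>2"
        unfolding f3 by (simp add: algebra_simps)
      have f5: "(1 - l) * d w = d w - l * d w" by (simp add: algebra_simps)
      have "0 \<le> l * d y - l * d w + K * l * ((w - p) \<bullet> (y - w)) + K / 2 * l\<^sup>2 * (norm (y - w))\<^sup>2"
        using f1 f2 f4 f5 by linarith
      also have "\<dots> = l * (?A + l * ?C)" by (simp add: algebra_simps power2_eq_square)
      finally show "0 \<le> ?A + l * ?C" using l by (simp add: zero_le_mult_iff)
    qed
    moreover have "K *\<^sub>R (p - w) \<bullet> (y - w) = - (K * ((w - p) \<bullet> (y - w)))"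
      by (simp add: inner_diff_left algebra_simps)
    ultimately show "d w + K *\<^sub>R (p - w) \<bullet> (y - w) \<le> d y" by linarith
  qed
  hence "w \<in> subdiff_dom Q d" using wQ by (auto simp: subdiff_dom_def)
  moreover have "dist w p < \<epsilon>" using wS r by (auto simp: dist_commute)
  ultimately show ?thesis by blast
qed

lemma mono_sub:
  assumes s: "s \<in> subdiff_on Q d z" and s2: "s2 \<in> subdiff_on Q d w" and zQ: "z \<in> Q" and wQ: "w \<in> Q"
  shows "0 \<le> (s2 - s) \<bullet> (w - z)"
proof -
  have "d z + s \<bullet> (w - z) \<le> d w" using s wQ by (simp add: subdiff_on_def)
  moreover have "d w + s2 \<bullet> (z - w) \<le> d z" using s2 zQ by (simp add: subdiff_on_def)
  moreover have "s2 \<bullet> (z - w) = - (s2 \<bullet> (w - z))" by (simp add: inner_diff_right)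
  moreover have "(s2 - s) \<bullet> (w - z) = s2 \<bullet> (w - z) - s \<bullet> (w - z)" by (simp add: inner_diff_left)
  ultimately show ?thesis by linarith
qed

lemma key:
  fixes d :: "'a::euclidean_space \<Rightarrow> real"
  assumes dgf: "dist_gen_fun N Q d d'" and n: "is_norm N" and Qcl: "closed Q" and Qc: "convex Q"
    and zQ: "z \<in> Q" and s: "s \<in> subdiff_on Q d z" and yQ: "y \<in> Q"
  shows "0 \<le> (d' z - s) \<bullet> (y - z)"
proof (rule ccontr)
  let ?c = "(d' z - s) \<bullet> (y - z)"
  assume "\<not> 0 \<le> ?c"
  hence c: "?c < 0" by simp
  define v where "v = y - z"
  define M where "M = norm (d' z - s)"
  define \<rho> where "\<rho> = - ?c / (2 * (M + 1))"
  define R where "R = norm v + \<rho> + 1"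
  define \<eta> where "\<eta> = - ?c / (4 * R)"
  have M0: "0 \<le> M" by (simp add: M_def)
  have rho: "0 < \<rho>" unfolding \<rho>_def using c M0 by (intro divide_pos_pos) auto
  have R: "0 < R" using rho by (simp add: R_def add_nonneg_pos)
  have eta: "0 < \<eta>" unfolding \<eta>_def using c R by (intro divide_pos_pos) auto
  have dc: "continuous_on Q d" and d0: "\<forall>x\<in>Q. 0 \<le> d x" and sc: "strongly_convex_1 N Q d"
    and sel: "\<forall>x\<in>subdiff_dom Q d. d' x \<in> subdiff_on Q d x"
    and cd': "continuous_on (subdiff_dom Q d) d'"
    using dgf by (auto simp: dist_gen_fun_def)
  have zD: "z \<in> subdiff_dom Q d" using zQ s by (auto simp: subdiff_dom_def)
  obtain \<delta> where \<delta>: "0 < \<delta>" and \<delta>c: "\<And>w. w \<in> subdiff_dom Q d \<Longrightarrow> dist w z < \<delta> \<Longrightarrow> dist (d' w) (d' z) < \<eta>"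
    using cd' zD eta unfolding continuous_on_iff by metis
  define t where "t = min 1 (\<delta> / (2 * R))"
  have t0: "0 < t" using \<delta> R by (simp add: t_def divide_pos_pos)
  have t1: "t \<le> 1" by (simp add: t_def)
  have tR: "t * R \<le> \<delta> / 2"
  proof -
    have "t * R \<le> (\<delta> / (2 * R)) * R" using R by (intro mult_right_mono) (auto simp: t_def)
    also have "\<dots> = \<delta> / 2" using R by simp
    finally show ?thesis .
  qed
  define p where "p = z + t *\<^sub>R v"
  have pQ: "p \<in> Q"
  proof -
    have "p = t *\<^sub>R y + (1 - t) *\<^sub>R z" by (simp add: p_def v_def algebra_simps)
    thus ?thesis using Qc yQ zQ t0 t1 by (simp add: convex_def)
  qed
  have cvx: "\<And>x y l. x \<in> Q \<Longrightarrow> y \<in> Q \<Longrightarrow> 0 \<le> l \<Longrightarrow> l \<le> 1 \<Longrightarrow>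
               d (l *\<^sub>R x + (1 - l) *\<^sub>R y) \<le> l * d x + (1 - l) * d y"
    using sc_convex[OF sc n] by blast
  obtain w where wD: "w \<in> subdiff_dom Q d" and wp: "dist w p < t * \<rho>"
    using density[OF Qcl Qc dc d0 cvx pQ, of "t * \<rho>"] t0 rho by auto
  have wQ: "w \<in> Q" using wD by (simp add: subdiff_dom_def)
  define e where "e = w - p"
  have ne: "norm e < t * \<rho>" using wp by (simp add: e_def dist_norm)
  have wz: "w - z = t *\<^sub>R v + e" by (simp add: e_def p_def)
  have nwz: "norm (w - z) \<le> t * R"
  proof -
    have "norm (w - z) \<le> norm (t *\<^sub>R v) + norm e" unfolding wz by (rule norm_triangle_ineq)
    also have "\<dots> \<le> t * norm v + t * \<rho>" using ne t0 by simp
    also have "\<dots> \<le> t * R" using t0 by (simp add: R_def algebra_simps)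
    finally show ?thesis .
  qed
  have "dist w z < \<delta>" using nwz tR \<delta> by (simp add: dist_norm)
  hence dd: "norm (d' w - d' z) < \<eta>" using \<delta>c[OF wD] by (simp add: dist_norm)
  have mono: "0 \<le> (d' w - s) \<bullet> (w - z)"
    by (rule mono_sub[OF s _ zQ wQ]) (use sel wD in blast)
  have split: "(d' w - s) \<bullet> (w - z) = (d' w - d' z) \<bullet> (w - z) + t * ?c + (d' z - s) \<bullet> e"
    unfolding wz by (simp add: v_def inner_add_right inner_diff_left algebra_simps)
  have b1: "(d' w - d' z) \<bullet> (w - z) \<le> \<eta> * (t * R)"
  proof -
    have "(d' w - d' z) \<bullet> (w - z) \<le> norm (d' w - d' z) * norm (w - z)" by (rule norm_cauchy_schwarz)
    also have "\<dots> \<le> \<eta> * (t * R)" using dd nwz eta by (intro mult_mono) auto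
    finally show ?thesis .
  qed
  have b2: "(d' z - s) \<bullet> e \<le> M * (t * \<rho>)"
  proof -
    have "(d' z - s) \<bullet> e \<le> M * norm e" unfolding M_def by (rule norm_cauchy_schwarz)
    also have "\<dots> \<le> M * (t * \<rho>)" using ne M0 by (intro mult_left_mono) auto
    finally show ?thesis .
  qed
  have e1: "\<eta> * (t * R) = t * (- ?c / 4)" using R by (simp add: \<eta>_def)
  have e2: "M * (t * \<rho>) \<le> t * (- ?c / 2)"
  proof -
    have "M * \<rho> = (- ?c / 2) * (M / (M + 1))" using M0 by (simp add: \<rho>_def field_simps)
    also have "\<dots> \<le> (- ?c / 2) * 1" using c M0 by (intro mult_left_mono) auto
    finally have "M * \<rho> \<le> - ?c / 2" by simp
    hence "t * (M * \<rho>) \<le> t * (- ?c / 2)" using t0 by (intro mult_left_mono) auto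
    thus ?thesis by (simp add: mult_ac)
  qed
  have "0 \<le> t * ?c + t * (- ?c / 4) + t * (- ?c / 2)" using mono split b1 b2 e1 e2 by linarith
  also have "\<dots> = t * (?c / 4)" by (simp add: algebra_simps)
  finally show False using t0 c by (simp add: zero_le_mult_iff)
qed


lemma prox_step:
  fixes d :: "'a::euclidean_space \<Rightarrow> real"
  assumes dgf: "dist_gen_fun N Q d d'" and n: "is_norm N" and Qcl: "closed Q" and Qc: "convex Q"
    and L: "0 < L"
    and lin_aff: "\<And>y. lin y = lin Z + Gs \<bullet> (y - Z)"
    and zmin: "is_arg_min (\<lambda>y. lin y + L * d y) (\<lambda>y. y \<in> Q) Z"
    and prox: "is_prox Q d d' Z ((c / L) *\<^sub>R G) XH"
    and yQ: "y \<in> Q"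
  shows "lin Z + L * d Z + c * (G \<bullet> (XH - Z)) + L / 2 * (N (Z - XH))\<^sup>2
         \<le> lin y + L * d y + c * (G \<bullet> (y - Z))"
proof -
  have ZQ: "Z \<in> Q" and Zle: "\<And>w. w \<in> Q \<Longrightarrow> lin Z + L * d Z \<le> lin w + L * d w"
    using zmin by (auto simp: is_arg_min_linorder)
  have XQ: "XH \<in> Q" and Xle: "\<And>w. w \<in> Q \<Longrightarrow>
      ((c / L) *\<^sub>R G) \<bullet> (XH - Z) + bregman d d' Z XH \<le> ((c / L) *\<^sub>R G) \<bullet> (w - Z) + bregman d d' Z w"
    using prox by (auto simp: is_prox_def is_arg_min_linorder)
  let ?s = "- (1 / L) *\<^sub>R Gs"
  have s: "?s \<in> subdiff_on Q d Z"
    unfolding subdiff_on_def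
  proof (intro CollectI ballI)
    fix w assume wQ: "w \<in> Q"
    have "lin Z + L * d Z \<le> lin Z + Gs \<bullet> (w - Z) + L * d w" using Zle[OF wQ] lin_aff[of w] by simp
    hence "L * d Z \<le> L * (d w + (1 / L) * (Gs \<bullet> (w - Z)))" using L by (simp add: algebra_simps)
    hence "d Z \<le> d w + (1 / L) * (Gs \<bullet> (w - Z))" using L by simp
    thus "d Z + ?s \<bullet> (w - Z) \<le> d w" by simp
  qed
  have sc: "strongly_convex_1 N Q d" and sel: "\<forall>x\<in>subdiff_dom Q d. d' x \<in> subdiff_on Q d x"
    using dgf by (auto simp: dist_gen_fun_def)
  have ZD: "Z \<in> subdiff_dom Q d" using ZQ s by (auto simp: subdiff_dom_def)
  have d'Z: "d' Z \<in> subdiff_on Q d Z" using sel ZD by blast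
  have k: "0 \<le> (d' Z - ?s) \<bullet> (y - Z)" by (rule key[OF dgf n Qcl Qc ZQ s yQ])
  hence k': "0 \<le> L * (d' Z \<bullet> (y - Z)) + Gs \<bullet> (y - Z)"
  proof -
    have "(d' Z - ?s) \<bullet> (y - Z) = d' Z \<bullet> (y - Z) + (1 / L) * (Gs \<bullet> (y - Z))"
      by (simp add: inner_diff_left inner_add_left)
    hence "0 \<le> L * (d' Z \<bullet> (y - Z) + (1 / L) * (Gs \<bullet> (y - Z)))" using k L by simp
    thus ?thesis using L by (simp add: algebra_simps)
  qed
  have g: "d Z + d' Z \<bullet> (XH - Z) + 1/2 * (N (XH - Z))\<^sup>2 \<le> d XH"
    by (rule growth[OF sc n Qc d'Z ZQ XQ])
  have nc: "N (XH - Z) = N (Z - XH)" by (rule isn_commute[OF n])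
  have p1: "c * (G \<bullet> (XH - Z)) + L * bregman d d' Z XH \<le> c * (G \<bullet> (y - Z)) + L * bregman d d' Z y"
  proof -
    have "L * (((c / L) *\<^sub>R G) \<bullet> (XH - Z) + bregman d d' Z XH) \<le> L * (((c / L) *\<^sub>R G) \<bullet> (y - Z) + bregman d d' Z y)"
      using Xle[OF yQ] L by simp
    thus ?thesis using L by (simp add: algebra_simps)
  qed
  have b1: "L * bregman d d' Z XH \<ge> L / 2 * (N (Z - XH))\<^sup>2"
  proof -
    have "1/2 * (N (XH - Z))\<^sup>2 \<le> bregman d d' Z XH" using g by (simp add: bregman_def)
    hence "L * (1/2 * (N (XH - Z))\<^sup>2) \<le> L * bregman d d' Z XH" using L by simp
    thus ?thesis using nc by simp
  qed
  have b2: "L * bregman d d' Z y = L * d y - L * d Z - L * (d' Z \<bullet> (y - Z))"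
    by (simp add: bregman_def algebra_simps)
  show ?thesis using lin_aff[of y] k' p1 b1 b2 by linarith
qed

lemma lin_aff:
  "lin_model f g \<gamma> x t y = lin_model f g \<gamma> x t z + (\<Sum>k\<le>t. \<gamma> k *\<^sub>R g (x k)) \<bullet> (y - z)"
proof -
  have "lin_model f g \<gamma> x t y = (\<Sum>k\<le>t. \<gamma> k * (f (x k) + g (x k) \<bullet> (z - x k)) + \<gamma> k * (g (x k) \<bullet> (y - z)))"
    unfolding lin_model_def by (intro sum.cong refl) (simp add: algebra_simps inner_diff_right)
  also have "\<dots> = lin_model f g \<gamma> x t z + (\<Sum>k\<le>t. \<gamma> k * (g (x k) \<bullet> (y - z)))"
    unfolding lin_model_def by (simp add: sum.distrib)
  also have "(\<Sum>k\<le>t. \<gamma> k * (g (x k) \<bullet> (y - z))) = (\<Sum>k\<le>t. \<gamma> k *\<^sub>R g (x k)) \<bullet> (y - z)"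
    by (simp add: inner_sum_left)
  finally show ?thesis .
qed

lemma lin_Suc:
  "lin_model f g \<gamma> x (Suc t) y = lin_model f g \<gamma> x t y + \<gamma> (Suc t) * (f (x (Suc t)) + g (x (Suc t)) \<bullet> (y - x (Suc t)))"
  by (simp add: lin_model_def)

lemma lin_0:
  "lin_model f g \<gamma> x 0 y = \<gamma> 0 * (f (x 0) + g (x 0) \<bullet> (y - x 0))"
  by (simp add: lin_model_def)


theorem theorem1:
  fixes N :: "real^'n \<Rightarrow> real"
    and Q :: "(real^'n) set"
    and f :: "real^'n \<Rightarrow> real" and g :: "real^'n \<Rightarrow> real^'n"
    and Lf :: real
    and d :: "real^'n \<Rightarrow> real" and d' :: "real^'n \<Rightarrow> real^'n"
    and T :: nat
    and \<gamma> :: "nat \<Rightarrow> real" and Lt :: "nat \<Rightarrow> real"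
    and x u z xh :: "nat \<Rightarrow> real^'n"
  defines "\<Gamma> \<equiv> (\<lambda>t. \<Sum>k\<le>t. \<gamma> k)"
  defines "\<tau> \<equiv> (\<lambda>t. \<gamma> (Suc t) / \<Gamma> (Suc t))"
  assumes norm: "is_norm N"
    and Q: "closed Q" "convex Q"
    and f_conv: "convex_on UNIV f"
    and f_grad: "\<And>y. (f has_derivative (\<lambda>h. g y \<bullet> h)) (at y)"
    and f_min: "\<exists>y\<in>Q. \<forall>w\<in>Q. f y \<le> f w"
    and L_pos: "Lf > 0"
    and L_lip: "\<And>y w. y \<in> Q \<Longrightarrow> w \<in> Q \<Longrightarrow> dual_norm N (g y - g w) \<le> Lf * N (y - w)"
    and dgf: "dist_gen_fun N Q d d'"
    and center: "is_arg_min d (\<lambda>y. y \<in> Q) (x 0)" and center0: "d (x 0) = 0"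
    and \<gamma>0: "0 < \<gamma> 0" "\<gamma> 0 \<le> 1"
    and \<gamma>_nonneg: "\<And>t. t \<le> Suc T \<Longrightarrow> 0 \<le> \<gamma> t"
    and \<gamma>_sq: "\<And>t. t \<le> Suc T \<Longrightarrow> (\<gamma> t)\<^sup>2 \<le> \<Gamma> t"
    and L0: "Lt 0 = Lf"
    and u0: "is_arg_min (\<lambda>y. \<gamma> 0 * (f (x 0) + g (x 0) \<bullet> (y - x 0)) + Lt 0 * d y) (\<lambda>y. y \<in> Q) (u 0)"
    and z0: "z 0 = u 0"
    and Lt_bd: "\<And>t. 1 \<le> t \<Longrightarrow> t \<le> T \<Longrightarrow> 0 < Lt t \<and> Lt t \<le> Lf"
    and Lt_desc: "\<And>t. 1 \<le> t \<Longrightarrow> t \<le> T \<Longrightarrow>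
        f (u t) \<le> f (x t) + g (x t) \<bullet> (u t - x t) + Lt t / 2 * (N (u t - x t))\<^sup>2"
    and zt: "\<And>t. 1 \<le> t \<Longrightarrow> t \<le> T \<Longrightarrow>
        is_arg_min (\<lambda>y. lin_model f g \<gamma> x t y + Lt t * d y) (\<lambda>y. y \<in> Q) (z t)"
    and x_step: "\<And>t. t \<le> T \<Longrightarrow> x (Suc t) = \<tau> t *\<^sub>R z t + (1 - \<tau> t) *\<^sub>R u t"
    and xh_step: "\<And>t. t \<le> T \<Longrightarrow> is_prox Q d d' (z t) ((\<gamma> (Suc t) / Lt t) *\<^sub>R g (x (Suc t))) (xh (Suc t))"
    and u_step: "\<And>t. t \<le> T \<Longrightarrow> u (Suc t) = \<tau> t *\<^sub>R xh (Suc t) + (1 - \<tau> t) *\<^sub>R u t"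
  shows "\<forall>t\<le>T. \<Gamma> t * f (u t)
           + (\<Sum>k<t. (Lt (Suc k) - Lt k) * (d (z (Suc k)) - 1/2 * (N (z k - xh (Suc k)))\<^sup>2))
         \<le> (INF y\<in>Q. lin_model f g \<gamma> x t y + Lt t * d y)"
proof -
  have sc: "strongly_convex_1 N Q d" using dgf by (simp add: dist_gen_fun_def)
  define \<psi> where "\<psi> t y = lin_model f g \<gamma> x t y + Lt t * d y" for t y
  have psi_fun: "\<psi> t = (\<lambda>y. lin_model f g \<gamma> x t y + Lt t * d y)" for t
    by (simp add: fun_eq_iff \<psi>_def)
  define S where "S t = (\<Sum>k<t. (Lt (Suc k) - Lt k) * (d (z (Suc k)) - 1/2 * (N (z k - xh (Suc k)))\<^sup>2))" for t
  have LP: "0 < Lt t" if "t \<le> T" for t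
  proof (cases "t = 0")
    case True then show ?thesis using L0 L_pos by simp
  next
    case False then show ?thesis using Lt_bd[of t] that by simp
  qed
  have ZM: "is_arg_min (\<psi> t) (\<lambda>y. y \<in> Q) (z t)" if "t \<le> T" for t
  proof (cases "t = 0")
    case True
    have "\<psi> 0 = (\<lambda>y. \<gamma> 0 * (f (x 0) + g (x 0) \<bullet> (y - x 0)) + Lt 0 * d y)"
      by (simp add: \<psi>_def lin_0 fun_eq_iff)
    then show ?thesis using True u0 z0 by simp
  next
    case False
    then show ?thesis using zt[of t] that unfolding \<psi>_def by simp
  qed
  have INFeq: "(INF y\<in>Q. \<psi> t y) = \<psi> t (z t)" if "t \<le> T" for t
  proof -
    have "z t \<in> Q" "\<And>y. y \<in> Q \<Longrightarrow> \<psi> t (z t) \<le> \<psi> t y"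
      using ZM[OF that] by (auto simp: is_arg_min_linorder)
    thus ?thesis by (intro cInf_eq_minimum) auto
  qed
  have \<Gamma>_Suc: "\<Gamma> (Suc t) = \<Gamma> t + \<gamma> (Suc t)" for t by (simp add: \<Gamma>_def)
  have \<Gamma>_pos: "0 < \<Gamma> t" if "t \<le> Suc T" for t
  proof -
    have "\<gamma> 0 \<le> (\<Sum>k\<le>t. \<gamma> k)"
      using \<gamma>_nonneg that by (intro member_le_sum) auto
    thus ?thesis using \<gamma>0 by (simp add: \<Gamma>_def)
  qed
  have main: "\<Gamma> t * f (u t) + S t \<le> \<psi> t (z t)" if "t \<le> T" for t
    using that
  proof (induction t)
    case 0
    have x0Q: "x 0 \<in> Q" and x0min: "\<And>y. y \<in> Q \<Longrightarrow> d (x 0) \<le> d y"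
      using center by (auto simp: is_arg_min_linorder)
    have u0Q: "u 0 \<in> Q" using u0 by (auto simp: is_arg_min_linorder)
    have desc: "f (u 0) \<le> f (x 0) + g (x 0) \<bullet> (u 0 - x 0) + Lf / 2 * (N (u 0 - x 0))\<^sup>2"
      by (rule descent[OF norm Q(2) f_grad L_lip x0Q u0Q])
    have s0: "0 \<in> subdiff_on Q d (x 0)" using x0min by (simp add: subdiff_on_def)
    have gr: "1/2 * (N (u 0 - x 0))\<^sup>2 \<le> d (u 0)"
      using growth[OF sc norm Q(2) s0 x0Q u0Q] center0 by simp
    have "\<gamma> 0 * f (u 0) \<le> \<gamma> 0 * (f (x 0) + g (x 0) \<bullet> (u 0 - x 0) + Lf / 2 * (N (u 0 - x 0))\<^sup>2)"
      using desc \<gamma>0 by (intro mult_left_mono) auto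
    moreover have "\<gamma> 0 * (Lf / 2 * (N (u 0 - x 0))\<^sup>2) \<le> 1 * (Lf / 2 * (N (u 0 - x 0))\<^sup>2)"
      using \<gamma>0 L_pos by (intro mult_right_mono) auto
    moreover have "Lf * (1/2 * (N (u 0 - x 0))\<^sup>2) \<le> Lf * d (u 0)"
      using gr L_pos by (intro mult_left_mono) auto
    moreover have "\<psi> 0 (z 0) = \<gamma> 0 * (f (x 0) + g (x 0) \<bullet> (u 0 - x 0)) + Lf * d (u 0)"
      by (simp add: \<psi>_def lin_0 z0 L0)
    ultimately show ?case by (simp add: \<Gamma>_def S_def algebra_simps)
  next
    case (Suc t)
    have tT: "t \<le> T" "t < T" using Suc.prems by auto
    note IH = Suc.IH[OF tT(1)]
    define G where "G = g (x (Suc t))"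
    define X where "X = x (Suc t)"
    define U where "U = u (Suc t)"
    define XH where "XH = xh (Suc t)"
    define Z where "Z = z t"
    define Z' where "Z' = z (Suc t)"
    define L where "L = Lt t"
    define L' where "L' = Lt (Suc t)"
    define D where "D = N (Z - XH)"
    define c where "c = \<gamma> (Suc t)"
    define G0 where "G0 = \<Gamma> t"
    define G1 where "G1 = \<Gamma> (Suc t)"
    define tau where "tau = \<tau> t"
    have Lpos: "0 < L" using LP[OF tT(1)] by (simp add: L_def)
    have L'pos: "0 < L'" using LP[OF Suc.prems] by (simp add: L'_def)
    have G1pos: "0 < G1" using \<Gamma>_pos[of "Suc t"] tT by (simp add: G1_def)
    have G1eq: "G1 = G0 + c" by (simp add: G1_def G0_def c_def \<Gamma>_Suc)
    have c0: "0 \<le> c" using \<gamma>_nonneg[of "Suc t"] tT by (simp add: c_def)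
    have G0nn: "0 \<le> G0" using \<Gamma>_pos[of t] tT by (simp add: G0_def)
    have taueq: "G1 * tau = c" using G1pos by (simp add: tau_def \<tau>_def c_def G1_def)
    have tau0: "0 \<le> tau" using G1pos c0 taueq by (simp add: tau_def \<tau>_def c_def G1_def)
    have csq: "c\<^sup>2 \<le> G1" using \<gamma>_sq[of "Suc t"] tT by (simp add: c_def G1_def)
    have Xeq: "X = tau *\<^sub>R Z + (1 - tau) *\<^sub>R u t" using x_step[OF tT(1)] by (simp add: X_def Z_def tau_def)
    have Ueq: "U = tau *\<^sub>R XH + (1 - tau) *\<^sub>R u t" using u_step[OF tT(1)] by (simp add: U_def XH_def tau_def)
    have UX: "U - X = tau *\<^sub>R (XH - Z)" unfolding Xeq Ueq by (simp add: algebra_simps)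
    have NUX: "N (U - X) = tau * D"
      using UX isn_scale[OF norm, of tau "XH - Z"] tau0 isn_commute[OF norm, of XH Z] by (simp add: D_def)
    have F2: "f U \<le> f X + G \<bullet> (U - X) + L' / 2 * (N (U - X))\<^sup>2"
      using Lt_desc[of "Suc t"] Suc.prems by (simp add: U_def X_def G_def L'_def)
    have F2': "G1 * f U \<le> G1 * f X + c * (G \<bullet> (XH - Z)) + L' / 2 * D\<^sup>2"
    proof -
      have "G1 * f U \<le> G1 * (f X + G \<bullet> (U - X) + L' / 2 * (N (U - X))\<^sup>2)"
        using F2 G1pos by (intro mult_left_mono) auto
      also have "\<dots> = G1 * f X + (G1 * tau) * (G \<bullet> (XH - Z)) + L' / 2 * (G1 * tau\<^sup>2) * D\<^sup>2"
        unfolding NUX by (simp add: UX algebra_simps power2_eq_square)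
      also have "G1 * tau\<^sup>2 \<le> 1"
      proof -
        have "G1 * tau\<^sup>2 = (G1 * tau) * (G1 * tau) / G1" using G1pos by (simp add: field_simps power2_eq_square)
        also have "\<dots> = c\<^sup>2 / G1" using taueq by (simp add: power2_eq_square)
        also have "\<dots> \<le> 1" using csq G1pos by simp
        finally show ?thesis .
      qed
      hence "L' / 2 * (G1 * tau\<^sup>2) * D\<^sup>2 \<le> L' / 2 * 1 * D\<^sup>2"
        using L'pos by (intro mult_right_mono mult_left_mono) auto
      finally show ?thesis using taueq by simp
    qed
    have F5: "f X + G \<bullet> (u t - X) \<le> f (u t)"
      unfolding G_def X_def by (rule tangent_ineq[OF f_conv f_grad])
    have F6: "G0 * (G \<bullet> (u t - X)) = - (c * (G \<bullet> (Z - X)))"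
    proof -
      have "G1 *\<^sub>R X = (G1 * tau) *\<^sub>R Z + (G1 - G1 * tau) *\<^sub>R u t"
        unfolding Xeq by (simp add: algebra_simps)
      hence "G1 *\<^sub>R X = c *\<^sub>R Z + G0 *\<^sub>R u t"
        unfolding taueq using G1eq by simp
      hence "G0 *\<^sub>R (u t - X) = - (c *\<^sub>R (Z - X))" using G1eq by (simp add: algebra_simps)
      hence "G \<bullet> (G0 *\<^sub>R (u t - X)) = G \<bullet> (- (c *\<^sub>R (Z - X)))" by simp
      thus ?thesis by simp
    qed
    have F5': "G0 * f X \<le> G0 * f (u t) + c * (G \<bullet> (Z - X))"
    proof -
      have "G0 * (f X + G \<bullet> (u t - X)) \<le> G0 * f (u t)" using F5 G0nn by (intro mult_left_mono)
      thus ?thesis using F6 by (simp add: algebra_simps)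
    qed
    have Z'Q: "Z' \<in> Q" using ZM[OF Suc.prems] by (simp add: Z'_def is_arg_min_linorder)
    have F7: "lin_model f g \<gamma> x t Z + L * d Z + c * (G \<bullet> (XH - Z)) + L / 2 * D\<^sup>2
         \<le> lin_model f g \<gamma> x t Z' + L * d Z' + c * (G \<bullet> (Z' - Z))"
      unfolding D_def
    proof (rule prox_step[OF dgf norm Q(1) Q(2) Lpos lin_aff])
      show "is_arg_min (\<lambda>y. lin_model f g \<gamma> x t y + L * d y) (\<lambda>y. y \<in> Q) Z"
        using ZM[OF tT(1)] unfolding psi_fun L_def Z_def .
      show "is_prox Q d d' Z ((c / L) *\<^sub>R G) XH"
        using xh_step[OF tT(1)] by (simp add: Z_def c_def L_def G_def XH_def X_def)
    qed (rule Z'Q)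
    have F8: "\<psi> (Suc t) Z' = \<psi> t Z' + c * f X + c * (G \<bullet> (Z' - X)) + (L' - L) * d Z'"
      by (simp add: \<psi>_def lin_Suc c_def X_def G_def L_def L'_def algebra_simps)
    have F9: "S (Suc t) = S t + (L' - L) * (d Z' - 1/2 * D\<^sup>2)"
      by (simp add: S_def L_def L'_def Z'_def D_def Z_def XH_def)
    have psiZ: "\<psi> t (z t) = lin_model f g \<gamma> x t Z + L * d Z" by (simp add: \<psi>_def Z_def L_def)
    have psiZ': "\<psi> t Z' = lin_model f g \<gamma> x t Z' + L * d Z'" by (simp add: \<psi>_def L_def)
    have inn0: "G \<bullet> (Z' - X) - G \<bullet> (Z' - Z) = G \<bullet> (Z - X)" by (simp add: inner_diff_right)
    have inn: "c * (G \<bullet> (Z' - X)) = c * (G \<bullet> (Z' - Z)) + c * (G \<bullet> (Z - X))"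
      using inn0 by (simp add: algebra_simps)
    have G1f: "G1 * f X = G0 * f X + c * f X" using G1eq by (simp add: algebra_simps)
    have e9: "(L' - L) * (d Z' - 1/2 * D\<^sup>2) = L' * d Z' - L * d Z' - L' / 2 * D\<^sup>2 + L / 2 * D\<^sup>2"
      by (simp add: field_simps)
    have e8: "(L' - L) * d Z' = L' * d Z' - L * d Z'" by (simp add: algebra_simps)
    have "G1 * f U + S (Suc t) \<le> \<psi> (Suc t) Z'"
      using IH F2' F5' F7 F8 F9 psiZ psiZ' inn G1f e9 e8 by (simp only: G0_def[symmetric])
    thus ?case by (simp add: G1_def U_def Z'_def)
  qed
  show ?thesis
  proof (intro allI impI)
    fix t assume tT: "t \<le> T"
    have "(INF y\<in>Q. lin_model f g \<gamma> x t y + Lt t * d y) = \<psi> t (z t)"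
      using INFeq[OF tT] by (simp add: \<psi>_def)
    thus "\<Gamma> t * f (u t) + (\<Sum>k<t. (Lt (Suc k) - Lt k) * (d (z (Suc k)) - 1/2 * (N (z k - xh (Suc k)))\<^sup>2))
         \<le> (INF y\<in>Q. lin_model f g \<gamma> x t y + Lt t * d y)"
      using main[OF tT] by (simp add: S_def)
  qed
qed

end
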